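(* Assume the setting described in the context and the initial-data bound $\|(\phi,\varpi_2)(\cdot,0)\|_{L^1(\mathbb{T}\times\mathbb{R})}\le C\mu^\alpha$ (with $\mu$ small, $\alpha>\frac{11}3$, and $\lambda+\mu$ of the same order as $\mu$). Then for $i=1,2$, all integers $k\ge0$, all $p\ge1$ and all $t\ge0$, $$\|\partial_y^k\theta_i(\cdot,t)\|_{L^p(\mathbb{R})}\lesssim\mu^\alpha[\bar\mu(1+t)]^{-\frac12+\frac1{2p}-\frac k2}.$$
   Context: Setting: $\mathbb{T}=\mathbb{R}/\mathbb{Z}$; $\rho=1+\phi$ is the density and $\boldsymbol m=(y,0)+\varpi$, $\varpi=(\varpi_1,\varpi_2)$, the momentum of a perturbation of the Couette flow for the 2-D compressible Navier–Stokes equations on $\mathbb{T}\times\mathbb{R}$ with Mach number $M>0$, viscosities $\mu>0$, $\lambda+\mu\ge0$ and smooth pressure $P$, $P'(1)=1$. Zero mode $\mathring f(y)=\int_{\mathbb{T}}f\,dx$. Constants: $\bar\mu=2\mu+\lambda$, $\bar c=1/M$, $a=2/(P''(1)\bar c+2\bar c)$. Let $w=(\mathring\phi,\mathring\varpi_2)^T$, $l_1=\frac1{2a}(-1,\frac1{\bar c})$, $l_2=\frac1{2a}(1,\frac1{\bar c})$, $\eta_i=l_i\int_{\mathbb{R}}w(y,0)\,dy$. Diffusion waves: $\theta_1(y,t)=\frac{\bar\mu^{1/2}}{\sqrt{2(1+t)}}\Gamma_1\big(\frac{y+\bar c(1+t)}{\sqrt{2\bar\mu(1+t)}}\big)$,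 $\theta_2(y,t)=\frac{\bar\mu^{1/2}}{\sqrt{2(1+t)}}\Gamma_2\big(\frac{y-\bar c(1+t)}{\sqrt{2\bar\mu(1+t)}}\big)$, $\Gamma_i(z)=\frac{(e^{\eta_i/\bar\mu}-1)e^{-z^2}}{\sqrt\pi+(e^{\eta_i/\bar\mu}-1)\int_z^\infty e^{-\xi^2}d\xi}$. The notation $A\lesssim B$ means $A\le C'B$ with $C'$ possibly depending on $M$ but independent of $\mu$, $\lambda+\mu$ and $t$. *)

theory Defs
  imports "HOL-Analysis.Analysis"
begin

text \<open>Functions on T x R are represented as 1-periodic-in-x functions real => real => real;
  integrals over T are integrals over [0,1].\<close>

definition zero_mode :: "(real \<Rightarrow> real \<Rightarrow> real) \<Rightarrow> real \<Rightarrow> real" where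
  "zero_mode f y = (LINT x:{0..1}|lborel. f x y)"

definition L1_TR :: "(real \<Rightarrow> real \<Rightarrow> real) \<Rightarrow> real" where
  "L1_TR f = (LINT z:({0..1} \<times> UNIV)|lborel. \<bar>f (fst z) (snd z)\<bar>)"

definition total_mass :: "(real \<Rightarrow> real \<Rightarrow> real) \<Rightarrow> real" where
  "total_mass f = (LINT y|lborel. zero_mode f y)"

text \<open>a = 2 / (P''(1) cbar + 2 cbar)\<close>
definition a_const :: "real \<Rightarrow> real \<Rightarrow> real" where
  "a_const P2 cbar = 2 / (P2 * cbar + 2 * cbar)"

text \<open>eta_i = l_i . int w(y,0) dy with l_1 = (-1, 1/cbar)/(2a), l_2 = (1, 1/cbar)/(2a)\<close>
definition eta :: "nat \<Rightarrow> real \<Rightarrow> real \<Rightarrow> real \<Rightarrow> real \<Rightarrow> real" where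
  "eta i a cbar m_phi m_w =
     (if i = 1 then (1 / (2 * a)) * (- m_phi + m_w / cbar)
      else (1 / (2 * a)) * (m_phi + m_w / cbar))"

definition gauss_tail :: "real \<Rightarrow> real" where
  "gauss_tail z = (LBINT \<xi>=ereal z..\<infinity>. exp (- \<xi>\<^sup>2))"

definition Gamma_dw :: "real \<Rightarrow> real \<Rightarrow> real \<Rightarrow> real" where
  "Gamma_dw et mubar z =
     (exp (et / mubar) - 1) * exp (- z\<^sup>2) / (sqrt pi + (exp (et / mubar) - 1) * gauss_tail z)"

definition theta :: "nat \<Rightarrow> real \<Rightarrow> real \<Rightarrow> real \<Rightarrow> real \<Rightarrow> real \<Rightarrow> real" where
  "theta i et mubar cbar y t =
     sqrt mubar / sqrt (2 * (1 + t)) *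
     Gamma_dw et mubar ((y + (if i = 1 then 1 else -1) * cbar * (1 + t)) / sqrt (2 * mubar * (1 + t)))"

end

theory Submission imports Defs "HOL-Probability.Probability" begin

lemma gauss_hbi: "has_bochner_integral lborel (\<lambda>x::real. exp (- x\<^sup>2)) (sqrt pi)"
proof -
  have "has_bochner_integral lborel (\<lambda>x::real. exp (- x\<^sup>2) * x ^ (2*0)) (sqrt pi * (fact (2 * 0) / (2 ^ (2 * 0) * fact 0)))"
    using has_bochner_integral_even_function[OF gaussian_moment_even_pos[where k=0]] by simp
  then show ?thesis by simp
qed

lemma gauss_integrable: "integrable lborel (\<lambda>x::real. exp (- x\<^sup>2))"
  using gauss_hbi by (auto simp: has_bochner_integral_iff)

lemma gauss_integral: "(\<integral>x. exp (- x\<^sup>2) \<partial>lborel) = sqrt pi"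
  using gauss_hbi by (auto simp: has_bochner_integral_iff)

lemma ind_int: "A \<in> sets lborel \<Longrightarrow> integrable lborel (f::real\<Rightarrow>real) \<Longrightarrow> integrable lborel (\<lambda>x. indicator A x * f x)"
  using integrable_mult_indicator[of A lborel f] by simp

lemma gauss_tail_eq: "gauss_tail z = (\<integral>x. indicator {z<..} x * exp (- x\<^sup>2) \<partial>lborel)"
  unfolding gauss_tail_def interval_lebesgue_integral_def set_lebesgue_integral_def
  by (simp add: einterval_def greaterThan_def)

lemma gauss_tail_nonneg: "0 \<le> gauss_tail z"
  unfolding gauss_tail_eq by (rule integral_nonneg_AE) (auto simp: indicator_def)

lemma gauss_tail_le: "gauss_tail z \<le> sqrt pi"
proof -
  have "gauss_tail z \<le> (\<integral>x. exp (- x\<^sup>2) \<partial>lborel)"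
    unfolding gauss_tail_eq
    using ind_int[OF _ gauss_integrable, of "{z<..}"]
    by (intro integral_mono) (auto simp: indicator_def gauss_integrable)
  then show ?thesis using gauss_integral by simp
qed

lemma gauss_tail_deriv: "(gauss_tail has_real_derivative (- exp (- z\<^sup>2))) (at z)"
proof -
  define a where "a = z - 1"
  define f where "f = (\<lambda>x::real. exp (- x\<^sup>2))"
  have cf: "continuous_on UNIV f" unfolding f_def by (intro continuous_intros)
  have ii: "interval_lebesgue_integrable lborel A B f" for A B
    unfolding interval_lebesgue_integrable_def set_integrable_def f_def
    by (auto intro!: ind_int gauss_integrable)
  have eq: "gauss_tail u = (LBINT y=ereal a..\<infinity>. f y) - (LBINT y=ereal a..ereal u. f y)" for u
    using interval_integral_sum[OF ii, of "ereal a" "ereal u" "\<infinity>"] unfolding gauss_tail_def f_def by simp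
  have "((\<lambda>u. LBINT y=a..u. f y) has_vector_derivative (f z)) (at z within {a..z+1})"
    by (rule interval_integral_FTC2) (auto simp: a_def intro: continuous_on_subset[OF cf])
  then have "((\<lambda>u. LBINT y=a..u. f y) has_vector_derivative (f z)) (at z)"
    by (simp add: at_within_Icc_at a_def)
  then have "((\<lambda>u. (LBINT y=ereal a..\<infinity>. f y) - (LBINT y=ereal a..ereal u. f y)) has_real_derivative (0 - f z)) (at z)"
    by (intro derivative_intros) (simp add: has_real_derivative_iff_has_vector_derivative)
  moreover have "gauss_tail = (\<lambda>u. (LBINT y=ereal a..\<infinity>. f y) - (LBINT y=ereal a..ereal u. f y))"
    using eq by (simp add: fun_eq_iff)
  ultimately show ?thesis using f_def by simp
qed

lemma mass_le:
  assumes "set_integrable lborel ({0..1::real} \<times> UNIV) (\<lambda>z. f (fst z) (snd z))"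
  shows "\<bar>total_mass f\<bar> \<le> L1_TR f"
proof -
  define h where "h = (\<lambda>x y. indicator {0..1::real} x * f x y)"
  have eqf: "(\<lambda>z::real\<times>real. indicator ({0..1} \<times> UNIV) z *\<^sub>R f (fst z) (snd z)) = case_prod h"
    by (auto simp: h_def fun_eq_iff indicator_def)
  have int: "integrable (lborel \<Otimes>\<^sub>M lborel) (case_prod h)"
    using assms unfolding set_integrable_def eqf lborel_prod by simp
  have "total_mass f = (\<integral>y. (\<integral>x. h x y \<partial>lborel) \<partial>lborel)"
    unfolding total_mass_def zero_mode_def set_lebesgue_integral_def h_def by simp
  also have "\<dots> = integral\<^sup>L (lborel \<Otimes>\<^sub>M lborel) (case_prod h)"
    by (rule lborel_pair.integral_snd[OF int])
  finally have "\<bar>total_mass f\<bar> \<le> integral\<^sup>L (lborel \<Otimes>\<^sub>M lborel) (\<lambda>z. \<bar>case_prod h z\<bar>)"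
    using integral_abs_bound by metis
  also have "\<dots> = L1_TR f"
    unfolding L1_TR_def set_lebesgue_integral_def lborel_prod
    by (intro Bochner_Integration.integral_cong) (auto simp: h_def indicator_def)
  finally show ?thesis .
qed

definition Gs :: "real \<Rightarrow> real \<Rightarrow> real" where
  "Gs s z = s * exp (- z\<^sup>2) / (sqrt pi + s * gauss_tail z)"

lemma den_ge: assumes "\<bar>s\<bar> \<le> 1/2" shows "sqrt pi / 2 \<le> sqrt pi + s * gauss_tail z"
proof -
  have "\<bar>s * gauss_tail z\<bar> \<le> 1/2 * sqrt pi"
    unfolding abs_mult using gauss_tail_nonneg[of z] gauss_tail_le[of z] assms
    by (intro mult_mono) auto
  then show ?thesis by linarith
qed

lemma Gs_bound: assumes "\<bar>s\<bar> \<le> 1/2" shows "\<bar>Gs s z\<bar> \<le> \<bar>s\<bar> * exp (- z\<^sup>2) * (2 / sqrt pi)"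
proof -
  have d: "sqrt pi / 2 \<le> sqrt pi + s * gauss_tail z" by (rule den_ge[OF assms])
  have p: "0 < sqrt pi / 2" by simp
  have "\<bar>Gs s z\<bar> = \<bar>s\<bar> * exp (- z\<^sup>2) / (sqrt pi + s * gauss_tail z)"
  proof -
    have "0 < sqrt pi + s * gauss_tail z" using d p by linarith
    then show ?thesis unfolding Gs_def by (simp add: abs_mult)
  qed
  also have "\<dots> \<le> \<bar>s\<bar> * exp (- z\<^sup>2) / (sqrt pi / 2)"
  proof (rule divide_left_mono)
    have pos: "0 < sqrt pi + s * gauss_tail z" using d p by linarith
    show "0 < (sqrt pi + s * gauss_tail z) * (sqrt pi / 2)" using pos p by (rule mult_pos_pos)
  qed (use d p in auto)
  finally show ?thesis by simp
qed

lemma Gs_le1: assumes "\<bar>s\<bar> \<le> 1/2" shows "\<bar>Gs s z\<bar> \<le> 1"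
proof -
  have "\<bar>s\<bar> * exp (- z\<^sup>2) * (2 / sqrt pi) \<le> (1/2) * 1 * (2 / sqrt pi)"
    using assms by (intro mult_mono) auto
  also have "\<dots> \<le> 1"
  proof -
    have "1 \<le> sqrt pi" using pi_gt3 by simp
    then show ?thesis by simp
  qed
  finally show ?thesis using Gs_bound[OF assms, of z] by linarith
qed

lemma alg_id: fixes D E s z :: real assumes "D \<noteq> 0"
  shows "((s * (E * (- (2 * z)))) * D - s * E * (0 + s * (- E))) / (D * D) = - 2 * z * (s * E / D) + (s * E / D)\<^sup>2"
  using assms by (simp add: field_simps power2_eq_square)

lemma Gs_deriv: assumes "\<bar>s\<bar> \<le> 1/2"
  shows "(Gs s has_real_derivative (- 2 * z * Gs s z + (Gs s z)\<^sup>2)) (at z)"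
proof -
  have d: "sqrt pi / 2 \<le> sqrt pi + s * gauss_tail z" by (rule den_ge[OF assms])
  have "0 < sqrt pi / 2" by simp
  then have nz: "sqrt pi + s * gauss_tail z \<noteq> 0" using d by linarith
  have e: "((\<lambda>z. s * exp (- z\<^sup>2)) has_real_derivative s * (exp (- z\<^sup>2) * (- (2 * z)))) (at z)"
    by (intro DERIV_cmult) (auto intro!: derivative_eq_intros)
  have g: "((\<lambda>z. sqrt pi + s * gauss_tail z) has_real_derivative 0 + s * (- exp (- z\<^sup>2))) (at z)"
    by (intro DERIV_add DERIV_cmult gauss_tail_deriv DERIV_const)
  have "((\<lambda>z. s * exp (- z\<^sup>2) / (sqrt pi + s * gauss_tail z)) has_real_derivative
     ((s * (exp (- z\<^sup>2) * (- (2 * z)))) * (sqrt pi + s * gauss_tail z) - s * exp (- z\<^sup>2) * (0 + s * (- exp (- z\<^sup>2))))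
      / ((sqrt pi + s * gauss_tail z) * (sqrt pi + s * gauss_tail z))) (at z)"
    by (rule DERIV_divide[OF e g nz])
  moreover have "((s * (exp (- z\<^sup>2) * (- (2 * z)))) * (sqrt pi + s * gauss_tail z) - s * exp (- z\<^sup>2) * (0 + s * (- exp (- z\<^sup>2))))
      / ((sqrt pi + s * gauss_tail z) * (sqrt pi + s * gauss_tail z)) = - 2 * z * Gs s z + (Gs s z)\<^sup>2"
    unfolding Gs_def using alg_id[OF nz] by simp
  ultimately show ?thesis by (simp add: Gs_def[abs_def])
qed


definition FL :: "real \<Rightarrow> (real poly \<times> nat) list \<Rightarrow> real \<Rightarrow> real" where
  "FL s xs z = sum_list (map (\<lambda>(q, j). poly q z * Gs s z ^ Suc j) xs)"

fun stepT :: "(real poly \<times> nat) list \<Rightarrow> (real poly \<times> nat) list" where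
  "stepT [] = []"
| "stepT ((q, j) # xs) = (pderiv q - smult (2 * real (Suc j)) (pCons 0 q), j) # (smult (real (Suc j)) q, Suc j) # stepT xs"

fun termsK :: "nat \<Rightarrow> (real poly \<times> nat) list" where
  "termsK 0 = [(1, 0)]"
| "termsK (Suc k) = stepT (termsK k)"

lemma FL_Nil[simp]: "FL s [] z = 0" by (simp add: FL_def)
lemma FL_Cons[simp]: "FL s ((q, j) # xs) z = poly q z * Gs s z ^ Suc j + FL s xs z" by (simp add: FL_def)

lemma FL_deriv: assumes "\<bar>s\<bar> \<le> 1/2"
  shows "(FL s xs has_real_derivative FL s (stepT xs) z) (at z)"
proof (induction xs rule: stepT.induct)
  case 1
  then show ?case by (simp add: FL_def[abs_def])
next
  case (2 q j xs)
  have G: "(Gs s has_real_derivative (- 2 * z * Gs s z + (Gs s z)\<^sup>2)) (at z)" by (rule Gs_deriv[OF assms])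
  have t: "((\<lambda>z. poly q z * Gs s z ^ Suc j) has_real_derivative
      poly (pderiv q) z * Gs s z ^ Suc j + poly q z * ((1 + real j) * ((- 2 * z * Gs s z + (Gs s z)\<^sup>2) * Gs s z ^ j))) (at z)"
    by (rule DERIV_cong[OF DERIV_mult[OF poly_DERIV[of q z] DERIV_power_Suc[OF G, of j]]]) (simp add: algebra_simps)
  have eqf: "FL s ((q, j) # xs) = (\<lambda>z. poly q z * Gs s z ^ Suc j + FL s xs z)" by (simp add: fun_eq_iff)
  have "(FL s ((q, j) # xs) has_real_derivative
     poly (pderiv q) z * Gs s z ^ Suc j + poly q z * ((1 + real j) * ((- 2 * z * Gs s z + (Gs s z)\<^sup>2) * Gs s z ^ j))
      + FL s (stepT xs) z) (at z)"
    unfolding eqf by (intro DERIV_add t 2)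
  moreover have "poly (pderiv q) z * Gs s z ^ Suc j + poly q z * ((1 + real j) * ((- 2 * z * Gs s z + (Gs s z)\<^sup>2) * Gs s z ^ j))
      + FL s (stepT xs) z = FL s (stepT ((q, j) # xs)) z"
    by (simp add: algebra_simps power2_eq_square)
  ultimately show ?case by (rule DERIV_cong)
qed

lemma deriv_Gs: assumes "\<bar>s\<bar> \<le> 1/2" shows "(deriv ^^ k) (Gs s) = FL s (termsK k)"
proof (induction k)
  case 0
  then show ?case by (simp add: fun_eq_iff)
next
  case (Suc k)
  have "(deriv ^^ Suc k) (Gs s) = deriv (FL s (termsK k))" using Suc by simp
  also have "\<dots> = FL s (termsK (Suc k))"
    using FL_deriv[OF assms] by (simp add: fun_eq_iff DERIV_imp_deriv)
  finally show ?case .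
qed


definition PB :: "(real poly \<times> nat) list \<Rightarrow> real \<Rightarrow> real" where
  "PB xs z = sum_list (map (\<lambda>(q, j). \<bar>poly q z\<bar>) xs)"

lemma FL_bound: assumes "\<bar>s\<bar> \<le> 1/2" shows "\<bar>FL s xs z\<bar> \<le> PB xs z * \<bar>Gs s z\<bar>"
proof (induction xs)
  case Nil
  then show ?case by (simp add: PB_def)
next
  case (Cons a xs)
  obtain q j where a: "a = (q, j)" by (cases a)
  have g1: "\<bar>Gs s z\<bar> \<le> 1" by (rule Gs_le1[OF assms])
  have "\<bar>Gs s z\<bar> ^ j \<le> 1" using g1 by (simp add: power_le_one)
  then have "\<bar>poly q z * Gs s z ^ Suc j\<bar> \<le> \<bar>poly q z\<bar> * \<bar>Gs s z\<bar>"
    by (simp add: abs_mult power_abs mult_left_le mult.assoc mult_left_mono)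
  then show ?case using Cons a by (simp add: PB_def algebra_simps abs_triangle_ineq order_trans[OF abs_triangle_ineq])
qed

lemma pow_exp_bound: "\<bar>z::real\<bar> ^ i * exp (- z\<^sup>2 / 2) \<le> exp (real i ^ 2 / 2)"
proof -
  have "\<bar>z\<bar> \<le> exp \<bar>z\<bar>" using exp_ge_add_one_self[of "\<bar>z\<bar>"] by linarith
  then have "\<bar>z\<bar> ^ i \<le> exp \<bar>z\<bar> ^ i" by (intro power_mono) auto
  also have "\<dots> = exp (real i * \<bar>z\<bar>)" by (simp add: exp_of_nat_mult)
  finally have "\<bar>z\<bar> ^ i * exp (- z\<^sup>2 / 2) \<le> exp (real i * \<bar>z\<bar>) * exp (- z\<^sup>2 / 2)"
    by (intro mult_right_mono) auto
  also have "\<dots> = exp (real i * \<bar>z\<bar> - z\<^sup>2 / 2)" by (simp add: exp_add[symmetric])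
  also have "\<dots> \<le> exp (real i ^ 2 / 2)"
  proof -
    have "0 \<le> (\<bar>z\<bar> - real i)\<^sup>2" by simp
    then have "real i * \<bar>z\<bar> - z\<^sup>2 / 2 \<le> real i ^ 2 / 2"
      by (simp add: power2_eq_square algebra_simps)
    then show ?thesis by simp
  qed
  finally show ?thesis .
qed

lemma poly_exp_bound: "\<exists>B. \<forall>z. \<bar>poly (q::real poly) z\<bar> * exp (- z\<^sup>2 / 2) \<le> B"
proof (intro exI allI)
  fix z :: real
  have "\<bar>poly q z\<bar> \<le> (\<Sum>i\<le>degree q. \<bar>coeff q i\<bar> * \<bar>z\<bar> ^ i)"
    unfolding poly_altdef by (rule order_trans[OF sum_abs]) (simp add: abs_mult power_abs)
  then have "\<bar>poly q z\<bar> * exp (- z\<^sup>2 / 2) \<le> (\<Sum>i\<le>degree q. \<bar>coeff q i\<bar> * \<bar>z\<bar> ^ i) * exp (- z\<^sup>2 / 2)"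
    by (intro mult_right_mono) auto
  also have "\<dots> = (\<Sum>i\<le>degree q. \<bar>coeff q i\<bar> * (\<bar>z\<bar> ^ i * exp (- z\<^sup>2 / 2)))"
    by (simp add: sum_distrib_right mult.assoc)
  also have "\<dots> \<le> (\<Sum>i\<le>degree q. \<bar>coeff q i\<bar> * exp (real i ^ 2 / 2))"
    by (intro sum_mono mult_left_mono pow_exp_bound) auto
  finally show "\<bar>poly q z\<bar> * exp (- z\<^sup>2 / 2) \<le> (\<Sum>i\<le>degree q. \<bar>coeff q i\<bar> * exp (real i ^ 2 / 2))" .
qed

lemma PB_bound: "\<exists>B\<ge>0. \<forall>z. PB xs z * exp (- z\<^sup>2 / 2) \<le> B"
proof (induction xs)
  case Nil
  then show ?case by (auto simp: PB_def)
next
  case (Cons a xs)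
  obtain q j where a: "a = (q, j)" by (cases a)
  obtain B where B: "B \<ge> 0" "\<forall>z. PB xs z * exp (- z\<^sup>2 / 2) \<le> B" using Cons by auto
  obtain B1 where B1: "\<forall>z. \<bar>poly q z\<bar> * exp (- z\<^sup>2 / 2) \<le> B1" using poly_exp_bound by blast
  have "\<forall>z. PB (a # xs) z * exp (- z\<^sup>2 / 2) \<le> max B1 0 + B"
  proof
    fix z
    have "PB (a # xs) z * exp (- z\<^sup>2 / 2) = \<bar>poly q z\<bar> * exp (- z\<^sup>2 / 2) + PB xs z * exp (- z\<^sup>2 / 2)"
      by (simp add: a PB_def algebra_simps)
    then show "PB (a # xs) z * exp (- z\<^sup>2 / 2) \<le> max B1 0 + B" using B1 B by (smt (z3))
  qed
  then show ?case using B by (intro exI[of _ "max B1 0 + B"]) auto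
qed

lemma dG_bound: "\<exists>K\<ge>0. \<forall>s z. \<bar>s\<bar> \<le> 1/2 \<longrightarrow> \<bar>(deriv ^^ k) (Gs s) z\<bar> \<le> \<bar>s\<bar> * K * exp (- z\<^sup>2 / 2)"
proof -
  obtain B where B: "B \<ge> 0" "\<forall>z. PB (termsK k) z * exp (- z\<^sup>2 / 2) \<le> B" using PB_bound by blast
  have "\<bar>(deriv ^^ k) (Gs s) z\<bar> \<le> \<bar>s\<bar> * (B * (2 / sqrt pi)) * exp (- z\<^sup>2 / 2)" if s: "\<bar>s\<bar> \<le> 1/2" for s z
  proof -
    have pb0: "0 \<le> PB (termsK k) z" unfolding PB_def by (intro sum_list_nonneg) auto
    have e: "exp (- z\<^sup>2) = exp (- z\<^sup>2 / 2) * exp (- z\<^sup>2 / 2)" by (simp add: exp_add[symmetric])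
    have "\<bar>(deriv ^^ k) (Gs s) z\<bar> \<le> PB (termsK k) z * \<bar>Gs s z\<bar>"
      using FL_bound[OF s] deriv_Gs[OF s] by simp
    also have "\<dots> \<le> PB (termsK k) z * (\<bar>s\<bar> * exp (- z\<^sup>2) * (2 / sqrt pi))"
      by (intro mult_left_mono Gs_bound[OF s] pb0)
    also have "\<dots> = \<bar>s\<bar> * (2 / sqrt pi) * exp (- z\<^sup>2 / 2) * (PB (termsK k) z * exp (- z\<^sup>2 / 2))"
      unfolding e by (simp add: algebra_simps)
    also have "\<dots> \<le> \<bar>s\<bar> * (2 / sqrt pi) * exp (- z\<^sup>2 / 2) * B"
      using B by (intro mult_left_mono) auto
    finally show ?thesis by (simp add: algebra_simps)
  qed
  then show ?thesis using B by (intro exI[of _ "B * (2 / sqrt pi)"]) auto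
qed


lemma deriv_scale:
  assumes F: "\<And>k z. (F k has_real_derivative F (Suc k) z) (at z)" and L: "L \<noteq> 0"
  shows "(deriv ^^ k) (\<lambda>y. A * F 0 ((y + b) / L)) = (\<lambda>y. A * (1 / L) ^ k * F k ((y + b) / L))"
proof (induction k)
  case 0
  then show ?case by simp
next
  case (Suc k)
  have "(deriv ^^ Suc k) (\<lambda>y. A * F 0 ((y + b) / L)) = deriv (\<lambda>y. A * (1 / L) ^ k * F k ((y + b) / L))"
    using Suc by simp
  also have "\<dots> = (\<lambda>y. A * (1 / L) ^ Suc k * F (Suc k) ((y + b) / L))"
  proof (rule ext, rule DERIV_imp_deriv)
    fix y
    have i: "((\<lambda>y. (y + b) / L) has_real_derivative 1 / L) (at y)"
      using L by (auto intro!: derivative_eq_intros)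
    have "((\<lambda>y. F k ((y + b) / L)) has_real_derivative F (Suc k) ((y + b) / L) * (1 / L)) (at y)"
      by (rule DERIV_chain2[OF F i])
    then have "((\<lambda>y. A * (1 / L) ^ k * F k ((y + b) / L)) has_real_derivative A * (1 / L) ^ k * (F (Suc k) ((y + b) / L) * (1 / L))) (at y)"
      by (rule DERIV_cmult)
    then show "((\<lambda>y. A * (1 / L) ^ k * F k ((y + b) / L)) has_real_derivative A * (1 / L) ^ Suc k * F (Suc k) ((y + b) / L)) (at y)"
      by (simp add: algebra_simps)
  qed
  finally show ?case .
qed

definition Jc :: real where "Jc = (\<integral>z. exp (- z\<^sup>2 / 2) \<partial>lborel)"

lemma gauss2_integrable: "integrable lborel (\<lambda>z::real. exp (- z\<^sup>2 / 2))"
proof -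
  have "integrable lborel (\<lambda>z. sqrt (2 * pi) * std_normal_density z)"
    by (intro integrable_mult_right) (simp add: integrable_normal_density)
  moreover have "(\<lambda>z. sqrt (2 * pi) * std_normal_density z) = (\<lambda>z::real. exp (- z\<^sup>2 / 2))"
    by (simp add: std_normal_density_def fun_eq_iff)
  ultimately show ?thesis by simp
qed

lemma Lp_scale:
  fixes g :: "real \<Rightarrow> real"
  assumes cont: "continuous_on UNIV g" and bd: "\<And>z. \<bar>g z\<bar> \<le> c * exp (- z\<^sup>2 / 2)"
    and c: "0 \<le> c" and L: "0 < L" and p: "1 \<le> p" and D: "0 \<le> D"
  shows "integrable lborel (\<lambda>y. \<bar>D * g ((y + b) / L)\<bar> powr p) \<and>
    (\<integral>y. \<bar>D * g ((y + b) / L)\<bar> powr p \<partial>lborel) powr (1 / p) \<le> D * L powr (1 / p) * c * Jc powr (1 / p)"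
proof -
  define h where "h = (\<lambda>z. \<bar>g z\<bar> powr p)"
  have gm: "g \<in> borel_measurable lborel" using borel_measurable_continuous_onI[OF cont] by simp
  have hm: "h \<in> borel_measurable lborel" unfolding h_def using gm by measurable
  have hb: "h z \<le> c powr p * exp (- z\<^sup>2 / 2)" for z
  proof -
    have "h z \<le> (c * exp (- z\<^sup>2 / 2)) powr p" unfolding h_def
      by (intro powr_mono2) (use p bd in auto)
    also have "\<dots> = c powr p * exp (- z\<^sup>2 / 2 * p)" by (simp add: powr_mult exp_powr_real)
    also have "\<dots> \<le> c powr p * exp (- z\<^sup>2 / 2)"
    proof -
      have "z\<^sup>2 / 2 * 1 \<le> z\<^sup>2 / 2 * p" using p by (intro mult_left_mono) auto
      then have "- z\<^sup>2 / 2 * p \<le> - z\<^sup>2 / 2" by simp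
      then show ?thesis by (intro mult_left_mono) auto
    qed
    finally show ?thesis .
  qed
  have h0: "0 \<le> h z" for z unfolding h_def by simp
  have hint: "integrable lborel h"
    by (rule Bochner_Integration.integrable_bound[OF integrable_mult_right[OF gauss2_integrable, of "c powr p"] hm])
       (use hb h0 in auto)
  have hI: "(\<integral>z. h z \<partial>lborel) \<le> c powr p * Jc"
  proof -
    have "(\<integral>z. h z \<partial>lborel) \<le> (\<integral>z. c powr p * exp (- z\<^sup>2 / 2) \<partial>lborel)"
      by (intro integral_mono hint integrable_mult_right gauss2_integrable hb)
    then show ?thesis unfolding Jc_def by simp
  qed
  have eqf: "(\<lambda>y. \<bar>D * g ((y + b) / L)\<bar> powr p) = (\<lambda>y. D powr p * h (b / L + (1 / L) * y))"
    by (auto simp: fun_eq_iff h_def abs_mult powr_mult add_divide_distrib D add.commute)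
  have Lnz: "1 / L \<noteq> 0" using L by simp
  have hint2: "integrable lborel (\<lambda>y. h (b / L + (1 / L) * y))"
    using lborel_integrable_real_affine[OF hint Lnz] by simp
  have int1: "(\<integral>z. h z \<partial>lborel) = (1 / L) * (\<integral>y. h (b / L + (1 / L) * y) \<partial>lborel)"
    using lborel_integral_real_affine[OF Lnz, of h "b / L"] L by simp
  have Ieq: "(\<integral>y. \<bar>D * g ((y + b) / L)\<bar> powr p \<partial>lborel) = D powr p * (L * (\<integral>z. h z \<partial>lborel))"
    unfolding eqf int1 using L by simp
  have "(\<integral>y. \<bar>D * g ((y + b) / L)\<bar> powr p \<partial>lborel) \<le> D powr p * (L * (c powr p * Jc))"
    unfolding Ieq using L hI by (intro mult_left_mono) auto
  moreover have "0 \<le> (\<integral>y. \<bar>D * g ((y + b) / L)\<bar> powr p \<partial>lborel)" by (intro integral_nonneg_AE) auto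
  ultimately have "(\<integral>y. \<bar>D * g ((y + b) / L)\<bar> powr p \<partial>lborel) powr (1 / p) \<le> (D powr p * (L * (c powr p * Jc))) powr (1 / p)"
    using p by (intro powr_mono2) auto
  also have "\<dots> = D * L powr (1 / p) * c * Jc powr (1 / p)"
    using p D c L by (simp add: powr_mult powr_powr powr_one)
  finally show ?thesis using eqf hint2 by (auto intro: integrable_mult_right)
qed


lemma sqrt_powr: "0 \<le> x \<Longrightarrow> sqrt x = x powr (1/2)" by (simp add: powr_half_sqrt)

lemma scal_id:
  fixes m T r :: real and k :: nat
  assumes m: "0 < m" and T: "0 < T"
  shows "sqrt m / sqrt (2 * T) * (1 / sqrt (2 * m * T)) ^ k * (2 * m * T) powr r / m
       = 2 powr (- 1/2 - real k / 2 + r) * (m * T) powr (- 1/2 - real k / 2 + r)"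
proof -
  have a: "(1 / sqrt (2 * m * T)) ^ k = (2 * m * T) powr (- real k / 2)"
  proof -
    have "(1 / sqrt (2 * m * T)) ^ k = ((2 * m * T) powr (- 1/2)) powr real k"
      using m T by (simp add: powr_realpow sqrt_powr powr_minus_divide)
    also have "\<dots> = (2 * m * T) powr (- real k / 2)" by (simp add: powr_powr)
    finally show ?thesis .
  qed
  have b: "sqrt m / sqrt (2 * T) / m = m powr (-1/2) * 2 powr (-1/2) * T powr (-1/2)"
    using m T by (simp add: sqrt_powr powr_mult powr_minus_divide field_simps powr_add[symmetric]) 
  have "sqrt m / sqrt (2 * T) * (1 / sqrt (2 * m * T)) ^ k * (2 * m * T) powr r / m
     = (m powr (-1/2) * 2 powr (-1/2) * T powr (-1/2)) * ((2 * m * T) powr (- real k / 2) * (2 * m * T) powr r)"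
    unfolding a b[symmetric] by (simp add: field_simps)
  also have "\<dots> = (m powr (-1/2) * 2 powr (-1/2) * T powr (-1/2)) * (2 powr (- real k / 2 + r) * m powr (- real k / 2 + r) * T powr (- real k / 2 + r))"
    by (simp only: powr_add powr_mult mult_ac)
  also have "\<dots> = 2 powr (- 1/2 - real k / 2 + r) * (m * T) powr (- 1/2 - real k / 2 + r)"
  proof -
    have e: "- 1/2 - real k / 2 + r = - 1/2 + (- real k / 2 + r)" by simp
    show ?thesis unfolding e powr_mult powr_add by (simp only: mult_ac)
  qed
  finally show ?thesis .
qed


lemma expm1_bound: fixes x :: real assumes "\<bar>x\<bar> \<le> 1/2" shows "\<bar>exp x - 1\<bar> \<le> 2 * \<bar>x\<bar>"
proof -
  have "exp x \<le> 1 + 2 * \<bar>x\<bar>" using exp_bound_lemma[of x] assms by simp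
  moreover have "1 + x \<le> exp x" by (rule exp_ge_add_one_self)
  ultimately show ?thesis by linarith
qed

lemma core:
  fixes et m cb t E K :: real and i k :: nat
  assumes m: "0 < m" and t: "0 \<le> t" and s1: "\<bar>exp (et / m) - 1\<bar> \<le> 1/2"
    and sE: "\<bar>exp (et / m) - 1\<bar> \<le> 2 * E / m"
    and K0: "0 \<le> K" and KB: "\<forall>s z. \<bar>s\<bar> \<le> 1/2 \<longrightarrow> \<bar>(deriv ^^ k) (Gs s) z\<bar> \<le> \<bar>s\<bar> * K * exp (- z\<^sup>2 / 2)"
  shows "(\<forall>p::real. 1 \<le> p \<longrightarrow> integrable lborel (\<lambda>y. \<bar>(deriv ^^ k) (\<lambda>y. theta i et m cb y t) y\<bar> powr p) \<and>
            (LINT y|lborel. \<bar>(deriv ^^ k) (\<lambda>y. theta i et m cb y t) y\<bar> powr p) powr (1 / p)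
              \<le> (2 * K * Jc powr (1 / p)) * E * (m * (1 + t)) powr (- 1/2 + 1 / (2 * p) - real k / 2))
     \<and> (\<forall>y. \<bar>(deriv ^^ k) (\<lambda>y. theta i et m cb y t) y\<bar> \<le> 2 * K * E * (m * (1 + t)) powr (- 1/2 - real k / 2))"
proof -
  define s where "s = exp (et / m) - 1"
  define T where "T = 1 + t"
  define A where "A = sqrt m / sqrt (2 * T)"
  define L where "L = sqrt (2 * m * T)"
  define b where "b = (if i = 1 then 1 else -1) * cb * T"
  define F where "F = (\<lambda>k. (deriv ^^ k) (Gs s))"
  have s: "\<bar>s\<bar> \<le> 1/2" using s1 s_def by simp
  have T: "0 < T" using t T_def by simp
  have L: "0 < L" using m T L_def by simp
  have A: "0 < A" using m T A_def by simp
  have "0 \<le> 2 * E / m" using sE by (meson abs_ge_zero order_trans)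
  then have E0: "0 \<le> E" using m by (simp add: zero_le_divide_iff)
  have th: "(\<lambda>y. theta i et m cb y t) = (\<lambda>y. A * F 0 ((y + b) / L))"
    by (simp add: fun_eq_iff theta_def Gamma_dw_def Gs_def F_def A_def L_def b_def T_def s_def)
  have FD: "(F k has_real_derivative F (Suc k) z) (at z)" for k z
    using FL_deriv[OF s, of "termsK k" z] deriv_Gs[OF s, of k] deriv_Gs[OF s, of "Suc k"] by (simp add: F_def)
  have dk: "(deriv ^^ k) (\<lambda>y. theta i et m cb y t) = (\<lambda>y. A * (1 / L) ^ k * F k ((y + b) / L))"
    unfolding th by (rule deriv_scale[where F=F, OF FD]) (use L in simp)
  have cont: "continuous_on UNIV (F k)"
    by (intro continuous_at_imp_continuous_on ballI DERIV_isCont[OF FD])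
  have bd: "\<bar>F k z\<bar> \<le> (\<bar>s\<bar> * K) * exp (- z\<^sup>2 / 2)" for z using KB s by (simp add: F_def)
  define D where "D = A * (1 / L) ^ k"
  have D: "0 \<le> D" using A L D_def by simp
  have key: "D * (2 * m * T) powr r = m * (2 powr (- 1/2 - real k / 2 + r) * (m * T) powr (- 1/2 - real k / 2 + r))" for r
  proof -
    have "D * (2 * m * T) powr r / m = 2 powr (- 1/2 - real k / 2 + r) * (m * T) powr (- 1/2 - real k / 2 + r)"
      unfolding D_def A_def L_def by (rule scal_id[OF m T])
    then show ?thesis using m by (simp add: divide_eq_eq mult.commute)
  qed
  have smE: "\<bar>s\<bar> \<le> 2 * E / m" using sE s_def by simp
  have part1: "integrable lborel (\<lambda>y. \<bar>(deriv ^^ k) (\<lambda>y. theta i et m cb y t) y\<bar> powr p) \<and>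
            (LINT y|lborel. \<bar>(deriv ^^ k) (\<lambda>y. theta i et m cb y t) y\<bar> powr p) powr (1 / p)
              \<le> (2 * K * Jc powr (1 / p)) * E * (m * (1 + t)) powr (- 1/2 + 1 / (2 * p) - real k / 2)" if p: "1 \<le> p" for p
  proof -
    define e where "e = - 1/2 - real k / 2 + 1 / (2 * p)"
    have e': "- 1/2 + 1 / (2 * p) - real k / 2 = e" by (simp add: e_def)
    have eqf: "(\<lambda>y. \<bar>(deriv ^^ k) (\<lambda>y. theta i et m cb y t) y\<bar> powr p) = (\<lambda>y. \<bar>D * F k ((y + b) / L)\<bar> powr p)"
      by (simp add: dk D_def)
    have sK: "0 \<le> \<bar>s\<bar> * K" using K0 by simp
    note LS = Lp_scale[OF cont bd sK L p D, of b]
    have Lp: "L powr (1 / p) = (2 * m * T) powr (1 / (2 * p))"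
      unfolding L_def using m T by (simp add: sqrt_powr powr_powr)
    have DL: "D * L powr (1 / p) = m * (2 powr e * (m * T) powr e)"
      unfolding Lp e_def by (rule key)
    have "1 / (2 * p) \<le> 1 / 2" using p by (simp add: field_simps)
    then have e0: "e \<le> 0" unfolding e_def by simp
    have twoe: "2 powr e \<le> 1" using powr_mono[OF e0, of 2] by simp
    have "(LINT y|lborel. \<bar>D * F k ((y + b) / L)\<bar> powr p) powr (1 / p) \<le> D * L powr (1 / p) * (\<bar>s\<bar> * K) * Jc powr (1 / p)"
      using LS by simp
    also have "\<dots> = m * (2 powr e * (m * T) powr e) * (\<bar>s\<bar> * K) * Jc powr (1 / p)" by (simp add: DL)
    also have "\<dots> \<le> m * (1 * (m * T) powr e) * ((2 * E / m) * K) * Jc powr (1 / p)"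
      using m twoe smE K0 by (intro mult_right_mono mult_left_mono mult_mono) auto
    also have "\<dots> = (2 * K * Jc powr (1 / p)) * E * (m * T) powr e" using m by (simp add: field_simps)
    finally show ?thesis using LS unfolding eqf e' T_def by simp
  qed
  have part2: "\<bar>(deriv ^^ k) (\<lambda>y. theta i et m cb y t) y\<bar> \<le> 2 * K * E * (m * (1 + t)) powr (- 1/2 - real k / 2)" for y
  proof -
    define e where "e = - 1/2 - real k / 2 + 0"
    have DL: "D = m * (2 powr e * (m * T) powr e)"
      using key[of 0] m T unfolding e_def by simp
    have e0: "e \<le> 0" by (simp add: e_def)
    have twoe: "2 powr e \<le> 1" using powr_mono[OF e0, of 2] by simp
    have "\<bar>(deriv ^^ k) (\<lambda>y. theta i et m cb y t) y\<bar> = D * \<bar>F k ((y + b) / L)\<bar>"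
      using D by (simp add: dk abs_mult flip: D_def)
    also have "\<dots> \<le> D * ((\<bar>s\<bar> * K) * 1)"
      using bd[of "(y + b) / L"] D K0 by (intro mult_left_mono order_trans[OF bd] mult_left_mono) auto
    also have "\<dots> = m * (2 powr e * (m * T) powr e) * (\<bar>s\<bar> * K)" by (simp add: DL)
    also have "\<dots> \<le> m * (1 * (m * T) powr e) * ((2 * E / m) * K)"
      using m twoe smE K0 by (intro mult_right_mono mult_left_mono mult_mono) auto
    also have "\<dots> = 2 * K * E * (m * T) powr e" using m by (simp add: field_simps)
    finally show ?thesis by (simp add: e_def T_def)
  qed
  show ?thesis using part1 part2 by blast
qed


lemma L1_nonneg: "0 \<le> L1_TR f"
  unfolding L1_TR_def set_lebesgue_integral_def by (intro integral_nonneg_AE) auto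

lemma eta_small:
  fixes M C \<alpha> \<mu> lam aa c0 K1 :: real
  assumes M: "M > 0" and c0: "c0 = \<bar>1 / (2 * aa)\<bar> * (1 + M)" and mu: "0 < \<mu>" and K1: "0 < K1"
    and lam: "K1 * \<mu> \<le> lam + \<mu>" and small: "c0 * C * \<mu> powr (\<alpha> - 1) \<le> 1/4"
    and i1: "set_integrable lborel ({0..1} \<times> UNIV) (\<lambda>z. \<phi>0 (fst z) (snd z))"
    and i2: "set_integrable lborel ({0..1} \<times> UNIV) (\<lambda>z. w0 (fst z) (snd z))"
    and L: "L1_TR \<phi>0 + L1_TR w0 \<le> C * \<mu> powr \<alpha>"
  shows "\<bar>exp (eta i aa (1 / M) (total_mass \<phi>0) (total_mass w0) / (2 * \<mu> + lam)) - 1\<bar> \<le> 1/2 \<and>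
         \<bar>exp (eta i aa (1 / M) (total_mass \<phi>0) (total_mass w0) / (2 * \<mu> + lam)) - 1\<bar> \<le> 2 * (c0 * C * \<mu> powr \<alpha>) / (2 * \<mu> + lam)"
proof -
  define a where "a = total_mass \<phi>0"
  define b where "b = total_mass w0"
  define La where "La = L1_TR \<phi>0"
  define Lb where "Lb = L1_TR w0"
  define et where "et = eta i aa (1 / M) a b"
  define m where "m = 2 * \<mu> + lam"
  define E where "E = c0 * C * \<mu> powr \<alpha>"
  have a: "\<bar>a\<bar> \<le> La" unfolding a_def La_def by (rule mass_le[OF i1])
  have b: "\<bar>b\<bar> \<le> Lb" unfolding b_def Lb_def by (rule mass_le[OF i2])
  have La0: "0 \<le> La" and Lb0: "0 \<le> Lb" unfolding La_def Lb_def by (rule L1_nonneg)+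
  have c00: "0 \<le> c0" using c0 M by simp
  have ab: "\<bar>a\<bar> + M * \<bar>b\<bar> \<le> (1 + M) * (La + Lb)"
  proof -
    have "M * \<bar>b\<bar> \<le> M * Lb" using b M by (intro mult_left_mono) auto
    moreover have "M * Lb \<le> M * (La + Lb)" using La0 M by (intro mult_left_mono) auto
    ultimately show ?thesis using a La0 Lb0 by (simp add: algebra_simps)
  qed
  have "\<bar>et\<bar> \<le> \<bar>1 / (2 * aa)\<bar> * (\<bar>a\<bar> + M * \<bar>b\<bar>)"
  proof -
    have "\<bar>et\<bar> = \<bar>1 / (2 * aa)\<bar> * \<bar>(if i = 1 then - a else a) + b * M\<bar>"
      unfolding et_def eta_def using M by (auto simp: abs_mult)
    also have "\<dots> \<le> \<bar>1 / (2 * aa)\<bar> * (\<bar>a\<bar> + M * \<bar>b\<bar>)"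
    proof (intro mult_left_mono)
      have "\<bar>(if i = 1 then - a else a) + b * M\<bar> \<le> \<bar>if i = 1 then - a else a\<bar> + \<bar>b * M\<bar>" by (rule abs_triangle_ineq)
      also have "\<dots> = \<bar>a\<bar> + M * \<bar>b\<bar>" using M by (simp add: abs_mult)
      finally show "\<bar>(if i = 1 then - a else a) + b * M\<bar> \<le> \<bar>a\<bar> + M * \<bar>b\<bar>" .
    qed simp
    finally show ?thesis .
  qed
  also have "\<dots> \<le> \<bar>1 / (2 * aa)\<bar> * ((1 + M) * (La + Lb))" by (intro mult_left_mono ab) auto
  also have "\<dots> \<le> c0 * (C * \<mu> powr \<alpha>)" unfolding c0 La_def Lb_def mult.assoc using L M by (intro mult_left_mono) auto
  finally have etb: "\<bar>et\<bar> \<le> E" by (simp add: E_def mult.assoc)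
  have mmu: "\<mu> \<le> m" using lam K1 mu m_def by (smt (z3) mult_pos_pos)
  have m0: "0 < m" using mmu mu by simp
  have pw: "\<mu> powr \<alpha> = \<mu> * \<mu> powr (\<alpha> - 1)"
  proof -
    have "\<mu> powr \<alpha> = \<mu> powr (1 + (\<alpha> - 1))" by simp
    also have "\<dots> = \<mu> powr 1 * \<mu> powr (\<alpha> - 1)" by (rule powr_add)
    finally show ?thesis using mu by simp
  qed
  have E0: "0 \<le> E" using etb by simp
  have "\<bar>et / m\<bar> \<le> E / m" using etb m0 by (simp add: divide_right_mono)
  also have "\<dots> \<le> E / \<mu>" using E0 mmu mu by (intro divide_left_mono) auto
  also have "\<dots> = c0 * C * \<mu> powr (\<alpha> - 1)" unfolding E_def pw using mu by simp
  also have "\<dots> \<le> 1/4" by (rule small)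
  finally have x4: "\<bar>et / m\<bar> \<le> 1/4" .
  have xe: "\<bar>exp (et / m) - 1\<bar> \<le> 2 * \<bar>et / m\<bar>" using x4 by (intro expm1_bound) linarith
  have "2 * \<bar>et / m\<bar> \<le> 2 * (E / m)" using etb m0 by (simp add: divide_right_mono)
  then have r2: "\<bar>exp (et / m) - 1\<bar> \<le> 2 * E / m" using xe by simp
  have r1: "\<bar>exp (et / m) - 1\<bar> \<le> 1/2" using xe x4 by linarith
  show ?thesis using r1 r2 unfolding et_def m_def E_def a_def b_def by blast
qed


lemma fin_ineq: fixes a b u X v :: real assumes "0 \<le> u" "0 \<le> X" "v \<le> a * (b * u) * X"
  shows "v \<le> (a * b + 1) * u * X"
proof -
  have "a * (b * u) * X = (a * b) * (u * X)" by simp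
  also have "\<dots> \<le> (a * b + 1) * (u * X)" using assms by (intro mult_right_mono) auto
  finally show ?thesis using assms by (simp add: mult.assoc)
qed

theorem mainTheorem3:
  fixes M C \<alpha> K1 K2 :: real and P :: "real \<Rightarrow> real"
  assumes "M > 0" and "C > 0" and "\<alpha> > 11/3"
    and "0 < K1" and "K1 \<le> K2"
    and "\<forall>n. \<forall>x>0. (deriv ^^ n) P differentiable (at x)"
    and "deriv P 1 = 1"
  shows "\<exists>\<mu>0>0. \<forall>k::nat.
    (\<forall>p::real. p \<ge> 1 \<longrightarrow>
      (\<exists>C'>0. \<forall>\<mu> lam (\<phi>0 :: real \<Rightarrow> real \<Rightarrow> real) (w0 :: real \<Rightarrow> real \<Rightarrow> real) t i.
        0 < \<mu> \<and> \<mu> \<le> \<mu>0 \<and> K1 * \<mu> \<le> lam + \<mu> \<and> lam + \<mu> \<le> K2 * \<mu> \<and>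
        (\<forall>x y. \<phi>0 (x + 1) y = \<phi>0 x y \<and> w0 (x + 1) y = w0 x y) \<and>
        set_integrable lborel ({0..1} \<times> UNIV) (\<lambda>z. \<phi>0 (fst z) (snd z)) \<and>
        set_integrable lborel ({0..1} \<times> UNIV) (\<lambda>z. w0 (fst z) (snd z)) \<and>
        L1_TR \<phi>0 + L1_TR w0 \<le> C * \<mu> powr \<alpha> \<and>
        t \<ge> 0 \<and> i \<in> {1, 2::nat} \<longrightarrow>
        (let mubar = 2 * \<mu> + lam; cbar = 1 / M;
             et = eta i (a_const ((deriv ^^ 2) P 1) cbar) cbar (total_mass \<phi>0) (total_mass w0);
             f = (deriv ^^ k) (\<lambda>y. theta i et mubar cbar y t)
         in integrable lborel (\<lambda>y. \<bar>f y\<bar> powr p) \<and>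
            (LINT y|lborel. \<bar>f y\<bar> powr p) powr (1 / p)
              \<le> C' * \<mu> powr \<alpha> * (mubar * (1 + t)) powr (- 1/2 + 1 / (2 * p) - real k / 2)))) \<and>
    (\<exists>C'>0. \<forall>\<mu> lam (\<phi>0 :: real \<Rightarrow> real \<Rightarrow> real) (w0 :: real \<Rightarrow> real \<Rightarrow> real) t i.
        0 < \<mu> \<and> \<mu> \<le> \<mu>0 \<and> K1 * \<mu> \<le> lam + \<mu> \<and> lam + \<mu> \<le> K2 * \<mu> \<and>
        (\<forall>x y. \<phi>0 (x + 1) y = \<phi>0 x y \<and> w0 (x + 1) y = w0 x y) \<and>
        set_integrable lborel ({0..1} \<times> UNIV) (\<lambda>z. \<phi>0 (fst z) (snd z)) \<and>
        set_integrable lborel ({0..1} \<times> UNIV) (\<lambda>z. w0 (fst z) (snd z)) \<and>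
        L1_TR \<phi>0 + L1_TR w0 \<le> C * \<mu> powr \<alpha> \<and>
        t \<ge> 0 \<and> i \<in> {1, 2::nat} \<longrightarrow>
        (let mubar = 2 * \<mu> + lam; cbar = 1 / M;
             et = eta i (a_const ((deriv ^^ 2) P 1) cbar) cbar (total_mass \<phi>0) (total_mass w0)
         in \<forall>y. \<bar>(deriv ^^ k) (\<lambda>y. theta i et mubar cbar y t) y\<bar>
              \<le> C' * \<mu> powr \<alpha> * (mubar * (1 + t)) powr (- 1/2 - real k / 2)))"
proof -
  define aa where "aa = a_const ((deriv ^^ 2) P 1) (1 / M)"
  define c0 where "c0 = \<bar>1 / (2 * aa)\<bar> * (1 + M)"
  define mu0 where "mu0 = (1 / (4 * (c0 * C + 1))) powr (1 / (\<alpha> - 1))"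
  have M: "0 < M" using assms(1) .
  have c00: "0 \<le> c0" using M by (simp add: c0_def)
  have cC: "0 \<le> c0 * C" using c00 assms(2) by simp
  have q: "0 < 1 / (4 * (c0 * C + 1))" using cC by simp
  have mu0: "0 < mu0" using q by (simp add: mu0_def)
  have a1: "0 < \<alpha> - 1" using assms(3) by simp
  have small: "c0 * C * \<mu> powr (\<alpha> - 1) \<le> 1/4" if mu: "0 < \<mu>" "\<mu> \<le> mu0" for \<mu>
  proof -
    have "\<mu> powr (\<alpha> - 1) \<le> mu0 powr (\<alpha> - 1)" using mu a1 by (intro powr_mono2) auto
    also have "\<dots> = 1 / (4 * (c0 * C + 1))"
      unfolding mu0_def powr_powr using a1 q by simp
    finally have "c0 * C * \<mu> powr (\<alpha> - 1) \<le> c0 * C * (1 / (4 * (c0 * C + 1)))"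
      using cC by (intro mult_left_mono) auto
    also have "\<dots> \<le> 1/4" using cC by (simp add: field_simps)
    finally show ?thesis .
  qed
  show ?thesis
  proof (rule exI[of _ mu0], intro conjI allI impI)
    show "0 < mu0" by (rule mu0)
  next
    fix k :: nat and p :: real assume p: "1 \<le> p"
    obtain K where K0: "0 \<le> K" and KB: "\<forall>s z. \<bar>s\<bar> \<le> 1/2 \<longrightarrow> \<bar>(deriv ^^ k) (Gs s) z\<bar> \<le> \<bar>s\<bar> * K * exp (- z\<^sup>2 / 2)"
      using dG_bound[of k] by blast
    have J0: "0 \<le> Jc powr (1 / p)" by simp
    show "\<exists>C'>0. \<forall>\<mu> lam (\<phi>0 :: real \<Rightarrow> real \<Rightarrow> real) (w0 :: real \<Rightarrow> real \<Rightarrow> real) t i.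
        0 < \<mu> \<and> \<mu> \<le> mu0 \<and> K1 * \<mu> \<le> lam + \<mu> \<and> lam + \<mu> \<le> K2 * \<mu> \<and>
        (\<forall>x y. \<phi>0 (x + 1) y = \<phi>0 x y \<and> w0 (x + 1) y = w0 x y) \<and>
        set_integrable lborel ({0..1} \<times> UNIV) (\<lambda>z. \<phi>0 (fst z) (snd z)) \<and>
        set_integrable lborel ({0..1} \<times> UNIV) (\<lambda>z. w0 (fst z) (snd z)) \<and>
        L1_TR \<phi>0 + L1_TR w0 \<le> C * \<mu> powr \<alpha> \<and>
        t \<ge> 0 \<and> i \<in> {1, 2::nat} \<longrightarrow>
        (let mubar = 2 * \<mu> + lam; cbar = 1 / M;
             et = eta i (a_const ((deriv ^^ 2) P 1) cbar) cbar (total_mass \<phi>0) (total_mass w0);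
             f = (deriv ^^ k) (\<lambda>y. theta i et mubar cbar y t)
         in integrable lborel (\<lambda>y. \<bar>f y\<bar> powr p) \<and>
            (LINT y|lborel. \<bar>f y\<bar> powr p) powr (1 / p)
              \<le> C' * \<mu> powr \<alpha> * (mubar * (1 + t)) powr (- 1/2 + 1 / (2 * p) - real k / 2))"
    proof (rule exI[of _ "2 * K * Jc powr (1 / p) * (c0 * C) + 1"], intro conjI allI impI)
      show "0 < 2 * K * Jc powr (1 / p) * (c0 * C) + 1" using K0 J0 c00 assms(2) by (intro add_nonneg_pos mult_nonneg_nonneg) auto
    next
      fix \<mu> lam t :: real and \<phi>0 w0 :: "real \<Rightarrow> real \<Rightarrow> real" and i :: nat
      assume H: "0 < \<mu> \<and> \<mu> \<le> mu0 \<and> K1 * \<mu> \<le> lam + \<mu> \<and> lam + \<mu> \<le> K2 * \<mu> \<and>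
        (\<forall>x y. \<phi>0 (x + 1) y = \<phi>0 x y \<and> w0 (x + 1) y = w0 x y) \<and>
        set_integrable lborel ({0..1} \<times> UNIV) (\<lambda>z. \<phi>0 (fst z) (snd z)) \<and>
        set_integrable lborel ({0..1} \<times> UNIV) (\<lambda>z. w0 (fst z) (snd z)) \<and>
        L1_TR \<phi>0 + L1_TR w0 \<le> C * \<mu> powr \<alpha> \<and>
        t \<ge> 0 \<and> i \<in> {1, 2::nat}"
      have mu: "0 < \<mu>" and mule: "\<mu> \<le> mu0" and lam: "K1 * \<mu> \<le> lam + \<mu>" and t: "0 \<le> t"
        and i1: "set_integrable lborel ({0..1} \<times> UNIV) (\<lambda>z. \<phi>0 (fst z) (snd z))"
        and i2: "set_integrable lborel ({0..1} \<times> UNIV) (\<lambda>z. w0 (fst z) (snd z))"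
        and L: "L1_TR \<phi>0 + L1_TR w0 \<le> C * \<mu> powr \<alpha>" using H by auto
      have m: "0 < 2 * \<mu> + lam" using lam mu assms(4) by (smt (z3) mult_pos_pos)
      note es = eta_small[OF M c0_def mu assms(4) lam small[OF mu mule] i1 i2 L, of i]
      note co = core[OF m t es[THEN conjunct1] es[THEN conjunct2] K0 KB, of i "1 / M"]
      have X0: "0 \<le> ((2 * \<mu> + lam) * (1 + t)) powr (- 1/2 + 1 / (2 * p) - real k / 2)" by simp
      have u0: "0 \<le> \<mu> powr \<alpha>" by simp
      show "let mubar = 2 * \<mu> + lam; cbar = 1 / M;
             et = eta i (a_const ((deriv ^^ 2) P 1) cbar) cbar (total_mass \<phi>0) (total_mass w0);
             f = (deriv ^^ k) (\<lambda>y. theta i et mubar cbar y t)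
         in integrable lborel (\<lambda>y. \<bar>f y\<bar> powr p) \<and>
            (LINT y|lborel. \<bar>f y\<bar> powr p) powr (1 / p)
              \<le> (2 * K * Jc powr (1 / p) * (c0 * C) + 1) * \<mu> powr \<alpha> * (mubar * (1 + t)) powr (- 1/2 + 1 / (2 * p) - real k / 2)"
        unfolding Let_def aa_def[symmetric]
        using co[THEN conjunct1, rule_format, OF p] fin_ineq[OF u0 X0] by (simp add: mult.assoc)
    qed
  next
    fix k :: nat
    obtain K where K0: "0 \<le> K" and KB: "\<forall>s z. \<bar>s\<bar> \<le> 1/2 \<longrightarrow> \<bar>(deriv ^^ k) (Gs s) z\<bar> \<le> \<bar>s\<bar> * K * exp (- z\<^sup>2 / 2)"
      using dG_bound[of k] by blast
    show "\<exists>C'>0. \<forall>\<mu> lam (\<phi>0 :: real \<Rightarrow> real \<Rightarrow> real) (w0 :: real \<Rightarrow> real \<Rightarrow> real) t i.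
        0 < \<mu> \<and> \<mu> \<le> mu0 \<and> K1 * \<mu> \<le> lam + \<mu> \<and> lam + \<mu> \<le> K2 * \<mu> \<and>
        (\<forall>x y. \<phi>0 (x + 1) y = \<phi>0 x y \<and> w0 (x + 1) y = w0 x y) \<and>
        set_integrable lborel ({0..1} \<times> UNIV) (\<lambda>z. \<phi>0 (fst z) (snd z)) \<and>
        set_integrable lborel ({0..1} \<times> UNIV) (\<lambda>z. w0 (fst z) (snd z)) \<and>
        L1_TR \<phi>0 + L1_TR w0 \<le> C * \<mu> powr \<alpha> \<and>
        t \<ge> 0 \<and> i \<in> {1, 2::nat} \<longrightarrow>
        (let mubar = 2 * \<mu> + lam; cbar = 1 / M;
             et = eta i (a_const ((deriv ^^ 2) P 1) cbar) cbar (total_mass \<phi>0) (total_mass w0)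
         in \<forall>y. \<bar>(deriv ^^ k) (\<lambda>y. theta i et mubar cbar y t) y\<bar>
              \<le> C' * \<mu> powr \<alpha> * (mubar * (1 + t)) powr (- 1/2 - real k / 2))"
    proof (rule exI[of _ "2 * K * (c0 * C) + 1"], intro conjI allI impI)
      show "0 < 2 * K * (c0 * C) + 1" using K0 c00 assms(2) by (intro add_nonneg_pos mult_nonneg_nonneg) auto
    next
      fix \<mu> lam t :: real and \<phi>0 w0 :: "real \<Rightarrow> real \<Rightarrow> real" and i :: nat
      assume H: "0 < \<mu> \<and> \<mu> \<le> mu0 \<and> K1 * \<mu> \<le> lam + \<mu> \<and> lam + \<mu> \<le> K2 * \<mu> \<and>
        (\<forall>x y. \<phi>0 (x + 1) y = \<phi>0 x y \<and> w0 (x + 1) y = w0 x y) \<and>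
        set_integrable lborel ({0..1} \<times> UNIV) (\<lambda>z. \<phi>0 (fst z) (snd z)) \<and>
        set_integrable lborel ({0..1} \<times> UNIV) (\<lambda>z. w0 (fst z) (snd z)) \<and>
        L1_TR \<phi>0 + L1_TR w0 \<le> C * \<mu> powr \<alpha> \<and>
        t \<ge> 0 \<and> i \<in> {1, 2::nat}"
      have mu: "0 < \<mu>" and mule: "\<mu> \<le> mu0" and lam: "K1 * \<mu> \<le> lam + \<mu>" and t: "0 \<le> t"
        and i1: "set_integrable lborel ({0..1} \<times> UNIV) (\<lambda>z. \<phi>0 (fst z) (snd z))"
        and i2: "set_integrable lborel ({0..1} \<times> UNIV) (\<lambda>z. w0 (fst z) (snd z))"
        and L: "L1_TR \<phi>0 + L1_TR w0 \<le> C * \<mu> powr \<alpha>" using H by auto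
      have m: "0 < 2 * \<mu> + lam" using lam mu assms(4) by (smt (z3) mult_pos_pos)
      note es = eta_small[OF M c0_def mu assms(4) lam small[OF mu mule] i1 i2 L, of i]
      note co = core[OF m t es[THEN conjunct1] es[THEN conjunct2] K0 KB, of i "1 / M"]
      have X0: "0 \<le> ((2 * \<mu> + lam) * (1 + t)) powr (- 1/2 - real k / 2)" by simp
      have u0: "0 \<le> \<mu> powr \<alpha>" by simp
      show "let mubar = 2 * \<mu> + lam; cbar = 1 / M;
             et = eta i (a_const ((deriv ^^ 2) P 1) cbar) cbar (total_mass \<phi>0) (total_mass w0)
         in \<forall>y. \<bar>(deriv ^^ k) (\<lambda>y. theta i et mubar cbar y t) y\<bar>
              \<le> (2 * K * (c0 * C) + 1) * \<mu> powr \<alpha> * (mubar * (1 + t)) powr (- 1/2 - real k / 2)"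
        unfolding Let_def aa_def[symmetric]
        using co[THEN conjunct2] fin_ineq[OF u0 X0] by (simp add: mult.assoc)
    qed
  qed
qed

end
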